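(* Let $u\in\mathbb{R}^m$. If there exists $b\in\mathbb{R}^p$ with $\mathcal{P}(b)\neq\emptyset$ such that $$K^+\overline{g}_{\mathcal{P}}(u,b)+K^-\underline{g}_{\mathcal{P}}(u,b)\le b,$$ then $u$ is solvable, i.e. there exists $x$ with $f(x,u)=0$; moreover such an $x$ can be found in $\mathcal{P}(b)$.
   Context: Let $f:\mathbb{R}^n\times\mathbb{R}^m\to\mathbb{R}^n$ be continuous and differentiable, with $f=M\psi$ for a continuously differentiable $\psi:\mathbb{R}^n\times\mathbb{R}^m\to\mathbb{R}^q$ and constant $M\in\mathbb{R}^{n\times q}$. There is a base point $(x_0,u_0)$ with $f(x_0,u_0)=0$ at which $J_{f,0}=\frac{\partial f}{\partial x}\big|_{(x_0,u_0)}$ is nonsingular; $J_{\psi,0}=\frac{\partial \psi}{\partial x}\big|_{(x_0,u_0)}$ and $g(x,u)=\psi(x,u)-J_{\psi,0}x\in\mathbb{R}^q$. Let $\underline{g},\overline{g}:\mathbb{R}^n\times\mathbb{R}^m\to\mathbb{R}^q$ satisfy $\underline{g}_k(x,u)\le g_k(x,u)\le\overline{g}_k(x,u)$ for all $(x,u)$ and $k$. A fixed matrix $A\in\mathbb{R}^{p\times n}$ is chosen so that $\mathcal{P}(b)=\{x:Ax\le b\}$ is bounded for every $b\in\mathbb{R}^p$. Define $\overline{g}_{\mathcal{P},k}(u,b)=\max_{x\in\mathcal{P}(b)}\overline{g}_k(x,u)$ and $\underline{g}_{\mathcal{P},k}(u,b)=\min_{x\in\mathcal{P}(b)}\underline{g}_k(x,u)$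 (assumed attained). Let $K=-AJ_{f,0}^{-1}M\in\mathbb{R}^{p\times q}$ and let $K^+,K^-$ be the matrices with $K^+_{ij}=K_{ij}$ if $K_{ij}>0$ and $0$ otherwise, $K^-_{ij}=K_{ij}$ if $K_{ij}<0$ and $0$ otherwise. $u$ is solvable if there is $x$ with $f(x,u)=0$. Vector inequalities are componentwise. *)

theory Defs
  imports "HOL-Analysis.Analysis"
begin

definition Ppoly :: "real^'n^'p \<Rightarrow> real^'p \<Rightarrow> (real^'n) set" where
  "Ppoly A b = {x. \<forall>i. (A *v x) $ i \<le> b $ i}"

text \<open>Upper bound of gbar over P(b) (a maximum whenever attained).\<close>
definition gP_upper :: "real^'n^'p \<Rightarrow> (real^'n \<Rightarrow> real^'m \<Rightarrow> real^'q) \<Rightarrow> real^'m \<Rightarrow> real^'p \<Rightarrow> real^'q" where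
  "gP_upper A gup u b = (\<chi> k. Sup ((\<lambda>x. gup x u $ k) ` Ppoly A b))"

definition gP_lower :: "real^'n^'p \<Rightarrow> (real^'n \<Rightarrow> real^'m \<Rightarrow> real^'q) \<Rightarrow> real^'m \<Rightarrow> real^'p \<Rightarrow> real^'q" where
  "gP_lower A glo u b = (\<chi> k. Inf ((\<lambda>x. glo x u $ k) ` Ppoly A b))"

definition pos_part_mat :: "real^'c^'r \<Rightarrow> real^'c^'r" where
  "pos_part_mat K = (\<chi> i j. if K $ i $ j > 0 then K $ i $ j else 0)"

definition neg_part_mat :: "real^'c^'r \<Rightarrow> real^'c^'r" where
  "neg_part_mat K = (\<chi> i j. if K $ i $ j < 0 then K $ i $ j else 0)"

end

theory Submission
  imports Defs
begin

lemma Ppoly_closed: "closed (Ppoly A b)"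
proof -
  have "Ppoly A b = (\<Inter>i. {x. (A *v x) $ i \<le> b $ i})" unfolding Ppoly_def by auto
  moreover have "closed {x. (A *v x) $ i \<le> b $ i}" for i
    by (intro closed_Collect_le continuous_intros linear_continuous_on matrix_vector_mul_linear_gen)
  ultimately show ?thesis by auto
qed

lemma Ppoly_convex: "convex (Ppoly A b)"
  unfolding convex_def Ppoly_def
proof (clarsimp)
  fix x y :: "real^'a" and u v :: real and i
  assume x: "\<forall>i. (A *v x) $ i \<le> b $ i" and y: "\<forall>i. (A *v y) $ i \<le> b $ i"
    and u: "0 \<le> u" and v: "0 \<le> v" and uv: "u + v = 1"
  have "(A *v (u *\<^sub>R x + v *\<^sub>R y)) $ i = u * (A *v x) $ i + v * (A *v y) $ i"
    by (simp add: matrix_vector_right_distrib matrix_vector_mult_scaleR)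
  also have "\<dots> \<le> u * b $ i + v * b $ i"
    using x y u v by (intro add_mono mult_left_mono) auto
  also have "\<dots> = b $ i" using uv by (metis distrib_right mult_1)
  finally show "(A *v (u *\<^sub>R x + v *\<^sub>R y)) $ i \<le> b $ i" .
qed

lemma mvm_minus_right: "(A::real^'a^'b) *v (- x) = - (A *v x)"
  by (simp add: matrix_vector_mult_def vec_eq_iff sum_negf)

lemma mvm_minus_left: "(- (A::real^'a^'b)) *v x = - (A *v x)"
  by (simp add: matrix_vector_mult_def vec_eq_iff sum_negf)

theorem theorem2:
  fixes f :: "real^'n \<Rightarrow> real^'m \<Rightarrow> real^'n"
    and \<psi> :: "real^'n \<Rightarrow> real^'m \<Rightarrow> real^'q"
    and D\<psi> :: "(real,'n) vec \<times> (real,'m) vec \<Rightarrow> (((real,'n) vec \<times> (real,'m) vec) \<Rightarrow>\<^sub>L (real^'q))"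
    and M :: "real^'q^'n"
    and x0 :: "real^'n" and u0 :: "real^'m"
    and Jf :: "real^'n^'n" and J\<psi> :: "real^'n^'q"
    and gup glo :: "real^'n \<Rightarrow> real^'m \<Rightarrow> real^'q"
    and A :: "real^'n^'p"
    and u :: "real^'m" and b :: "real^'p"
  assumes f_cont: "continuous_on UNIV (\<lambda>z. f (fst z) (snd z))"
    and f_diff: "\<forall>z. (\<lambda>z. f (fst z) (snd z)) differentiable (at z)"
    and psi_C1: "\<forall>z. ((\<lambda>z. \<psi> (fst z) (snd z)) has_derivative blinfun_apply (D\<psi> z)) (at z)"
    and psi_C1_cont: "continuous_on UNIV D\<psi>"
    and f_eq: "\<forall>x u. f x u = M *v \<psi> x u"
    and base: "f x0 u0 = 0"
    and Jf_def: "((\<lambda>x. f x u0) has_derivative (\<lambda>h. Jf *v h)) (at x0)"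
    and Jf_nonsing: "invertible Jf"
    and Jpsi_def: "((\<lambda>x. \<psi> x u0) has_derivative (\<lambda>h. J\<psi> *v h)) (at x0)"
    and g_bounds: "\<forall>x u k. gup x u $ k \<ge> (\<psi> x u - J\<psi> *v x) $ k
                          \<and> glo x u $ k \<le> (\<psi> x u - J\<psi> *v x) $ k"
    and P_bounded: "\<forall>b'. bounded (Ppoly A b')"
    and max_attained: "\<forall>k. \<exists>x\<in>Ppoly A b. \<forall>y\<in>Ppoly A b. gup y u $ k \<le> gup x u $ k"
    and min_attained: "\<forall>k. \<exists>x\<in>Ppoly A b. \<forall>y\<in>Ppoly A b. glo x u $ k \<le> glo y u $ k"
    and P_nonempty: "Ppoly A b \<noteq> {}"
    and cond: "\<forall>i. (pos_part_mat (- (A ** matrix_inv Jf ** M)) *v gP_upper A gup u b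
                  + neg_part_mat (- (A ** matrix_inv Jf ** M)) *v gP_lower A glo u b) $ i \<le> b $ i"
  shows "\<exists>x\<in>Ppoly A b. f x u = 0"
proof -
  define S where "S = Ppoly A b"
  define g where "g x = \<psi> x u - J\<psi> *v x" for x
  define K where "K = - (A ** matrix_inv Jf ** M)"
  define T where "T x = - (matrix_inv Jf *v (M *v g x))" for x
  have "((\<lambda>x. M *v \<psi> x u0) has_derivative (\<lambda>h. M *v (J\<psi> *v h))) (at x0)"
    by (rule bounded_linear.has_derivative[OF _ Jpsi_def]) (rule matrix_vector_mul_bounded_linear)
  moreover have "((\<lambda>x. M *v \<psi> x u0) has_derivative (\<lambda>h. Jf *v h)) (at x0)"
    using Jf_def f_eq by simp
  ultimately have JfM: "(\<lambda>h. Jf *v h) = (\<lambda>h. M *v (J\<psi> *v h))"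
    using has_derivative_unique by metis
  have feq: "f x u = Jf *v x + M *v g x" for x
  proof -
    have "Jf *v x = M *v (J\<psi> *v x)" using fun_cong[OF JfM] by simp
    thus ?thesis by (simp add: f_eq g_def matrix_vector_mult_diff_distrib)
  qed
  have inv: "Jf ** matrix_inv Jf = mat 1" using Jf_nonsing unfolding invertible_def matrix_inv_def by (rule someI_ex[THEN conjunct1])
  have psicont: "continuous_on UNIV (\<lambda>x. \<psi> x u)"
  proof -
    have "continuous_on UNIV (\<lambda>z. \<psi> (fst z) (snd z))"
      using psi_C1 has_derivative_continuous by (intro continuous_at_imp_continuous_on ballI) blast
    hence "continuous_on UNIV ((\<lambda>z. \<psi> (fst z) (snd z)) \<circ> (\<lambda>x. (x, u)))"
      by (intro continuous_on_compose continuous_intros) (auto elim: continuous_on_subset)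
    thus ?thesis by (simp add: o_def)
  qed
  have Tcont: "continuous_on S T"
  proof -
    have lin: "continuous_on X ((*v) B)" for X and B :: "real^'c^'d"
      by (rule linear_continuous_on[OF matrix_vector_mul_bounded_linear])
    have g: "continuous_on UNIV g" unfolding g_def
      by (intro continuous_on_diff psicont lin)
    have "continuous_on UNIV ((*v) (matrix_inv Jf) \<circ> ((*v) M \<circ> g))"
      by (intro continuous_on_compose g lin)
    hence "continuous_on UNIV T" unfolding T_def o_def by (intro continuous_on_minus) simp
    thus ?thesis by (rule continuous_on_subset) simp
  qed
  have Tmap: "T ` S \<subseteq> S"
  proof clarify
    fix x assume xS: "x \<in> S"
    have AT: "A *v T x = K *v g x"
      by (simp add: T_def K_def matrix_vector_mul_assoc matrix_mul_assoc mvm_minus_right mvm_minus_left)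
    show "T x \<in> S" unfolding S_def Ppoly_def
    proof clarify
      fix i
      let ?U = "gP_upper A gup u b" and ?L = "gP_lower A glo u b"
      have le: "K $ i $ k * g x $ k \<le> pos_part_mat K $ i $ k * ?U $ k + neg_part_mat K $ i $ k * ?L $ k" for k
      proof -
        obtain xm where xm: "xm \<in> S" "\<forall>y\<in>S. gup y u $ k \<le> gup xm u $ k"
          using max_attained S_def by blast
        obtain xn where xn: "xn \<in> S" "\<forall>y\<in>S. glo xn u $ k \<le> glo y u $ k"
          using min_attained S_def by blast
        have U: "?U $ k \<ge> gup x u $ k" unfolding gP_upper_def S_def[symmetric]
          using xS xm by (auto intro!: cSup_upper bdd_aboveI2)
        have L: "?L $ k \<le> glo x u $ k" unfolding gP_lower_def S_def[symmetric]
          using xS xn by (auto intro!: cInf_lower bdd_belowI2)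
        have "g x $ k \<le> gup x u $ k" "glo x u $ k \<le> g x $ k" using g_bounds g_def by auto
        hence gu: "g x $ k \<le> ?U $ k" and gl: "?L $ k \<le> g x $ k" using U L by linarith+
        consider "K $ i $ k > 0" | "K $ i $ k < 0" | "K $ i $ k = 0" by linarith
        thus ?thesis
        proof cases
          case 1
          hence "K $ i $ k * g x $ k \<le> K $ i $ k * ?U $ k" using gu by (intro mult_left_mono) auto
          thus ?thesis using 1 by (simp add: pos_part_mat_def neg_part_mat_def)
        next
          case 2
          hence "K $ i $ k * g x $ k \<le> K $ i $ k * ?L $ k" using gl by (intro mult_left_mono_neg) auto
          thus ?thesis using 2 by (simp add: pos_part_mat_def neg_part_mat_def)
        next
          case 3
          thus ?thesis by (simp add: pos_part_mat_def neg_part_mat_def)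
        qed
      qed
      have "(A *v T x) $ i \<le> (pos_part_mat K *v ?U + neg_part_mat K *v ?L) $ i"
        unfolding AT by (simp add: matrix_vector_mult_def sum.distrib[symmetric] sum_mono le)
      also have "\<dots> \<le> b $ i" using cond K_def by simp
      finally show "(A *v T x) $ i \<le> b $ i" .
    qed
  qed
  have "compact S" using P_bounded Ppoly_closed S_def by (simp add: compact_eq_bounded_closed)
  then obtain x where xS: "x \<in> S" and fx: "T x = x"
    using brouwer[of S T] Ppoly_convex[of A b] Tcont Tmap P_nonempty S_def by (auto simp: image_subset_iff_funcset)
  have "Jf *v x = - (M *v g x)"
  proof -
    have "Jf *v x = Jf *v T x" using fx by simp
    also have "\<dots> = - ((Jf ** matrix_inv Jf) *v (M *v g x))"
      unfolding T_def mvm_minus_right matrix_vector_mul_assoc by (simp add: matrix_mul_assoc)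
    finally show ?thesis by (simp add: inv)
  qed
  hence "f x u = 0" by (simp add: feq)
  thus ?thesis using xS S_def by blast
qed

end
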